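(* Let $\ell,d,\rho$ be integers with $1\le\ell\le m$, $1\le d\le\ell(q-1)$ and $0\le\rho\le|\mathbb{H}^{(\ell)}_{\le d-1}|$. Then $\mathsf{SH}^{(\ell)}(\mathcal{M}^{(\ell)}_{d-1}(\rho))\cap\mathbb{H}^{(\ell)}_d=\mathcal{L}^{(\ell)}_d(\rho')$ for some nonnegative integer $\rho'$. Moreover, if $\rho$ is positive, then so is $\rho'$.
   Context: $q$ is a prime power and $m$ a positive integer. For $0\le\ell\le m$, $\mathbb{H}^{(\ell)}=\{x_0^{a_0}\cdots x_{\ell-1}^{a_{\ell-1}}:0\le a_j\le q-1\}$; $\mathbb{H}^{(\ell)}_d$ and $\mathbb{H}^{(\ell)}_{\le d}$ are its elements of degree $d$, resp. degree $\le d$. For $\mathcal{T}\subseteq\mathbb{H}^{(\ell)}$, $\mathsf{SH}^{(\ell)}(\mathcal{T})=\{\mu\in\mathbb{H}^{(\ell)}:\nu\mid\mu\text{ for some }\nu\in\mathcal{T}\}$. Lexicographic order: $x_0^{b_0}\cdots\prec x_0^{a_0}\cdots$ iff at the first index where exponents differ $a_i>b_i$. $\mathcal{M}^{(\ell)}_{k}(\rho)$ is the set of the first $\rho$ elements of $\mathbb{H}^{(\ell)}_{\le k}$ in descending lexicographic order; $\mathcal{L}^{(\ell)}_d(\rho')$ is the set of the first $\rho'$ elements of $\mathbb{H}^{(\ell)}_d$ in descending lexicographic order. *)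

theory Defs
  imports "HOL-Computational_Algebra.Primes"
begin

text \<open>A monomial x_0^a_0 ... x_{l-1}^a_{l-1} is represented by its exponent list
  [a_0, ..., a_{l-1}] of length l.\<close>

definition Hmon :: "nat \<Rightarrow> nat \<Rightarrow> nat list set" where
  "Hmon l q = {a. length a = l \<and> (\<forall>i<l. a ! i \<le> q - 1)}"

definition mdeg :: "nat list \<Rightarrow> nat" where
  "mdeg a = sum_list a"

definition Hdeg :: "nat \<Rightarrow> nat \<Rightarrow> nat \<Rightarrow> nat list set" where
  "Hdeg l q d = {a \<in> Hmon l q. mdeg a = d}"

definition Hle :: "nat \<Rightarrow> nat \<Rightarrow> nat \<Rightarrow> nat list set" where
  "Hle l q d = {a \<in> Hmon l q. mdeg a \<le> d}"

definition mdvd :: "nat list \<Rightarrow> nat list \<Rightarrow> bool" where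
  "mdvd nu mu \<longleftrightarrow> length nu = length mu \<and> (\<forall>i<length mu. nu ! i \<le> mu ! i)"

definition SH :: "nat \<Rightarrow> nat \<Rightarrow> nat list set \<Rightarrow> nat list set" where
  "SH l q T = {mu \<in> Hmon l q. \<exists>nu\<in>T. mdvd nu mu}"

text \<open>lex_less b a means b \<prec> a: at the first index where the exponents differ, a_i > b_i.\<close>
definition lex_less :: "nat list \<Rightarrow> nat list \<Rightarrow> bool" where
  "lex_less b a \<longleftrightarrow> length b = length a \<and>
     (\<exists>i<length a. take i b = take i a \<and> b ! i < a ! i)"

text \<open>The first rho elements of S in descending lexicographic order: those elements
  with fewer than rho elements of S strictly above them.\<close>
definition first_lex :: "nat list set \<Rightarrow> nat \<Rightarrow> nat list set" where
  "first_lex S rho = {mu \<in> S. card {nu \<in> S. lex_less mu nu} < rho}"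

definition Mset :: "nat \<Rightarrow> nat \<Rightarrow> nat \<Rightarrow> nat \<Rightarrow> nat list set" where
  "Mset l q k rho = first_lex (Hle l q k) rho"

definition Lset :: "nat \<Rightarrow> nat \<Rightarrow> nat \<Rightarrow> nat \<Rightarrow> nat list set" where
  "Lset l q d rho = first_lex (Hdeg l q d) rho"

definition prime_power :: "nat \<Rightarrow> bool" where
  "prime_power q \<longleftrightarrow> (\<exists>p k. prime p \<and> k \<ge> 1 \<and> q = p ^ k)"

end

theory Submission
  imports Defs
begin

lemma lex_less_iff:
  "lex_less b a \<longleftrightarrow> length b = length a \<and> (\<exists>i<length a. (\<forall>t<i. b!t = a!t) \<and> b!i < a!i)"
proof -
  have "take i b = take i a \<longleftrightarrow> (\<forall>t<i. b!t = a!t)" if "length b = length a" "i < length a" for i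
    using that by (auto simp: list_eq_iff_nth_eq)
  then show ?thesis unfolding lex_less_def by auto
qed

lemma lex_irrefl: "\<not> lex_less a a"
  by (auto simp: lex_less_iff)

lemma lex_trans:
  assumes "lex_less c b" "lex_less b a" shows "lex_less c a"
proof -
  obtain i where i: "i < length b" "\<forall>t<i. c!t = b!t" "c!i < b!i" "length c = length b"
    using assms(1) by (auto simp: lex_less_iff)
  obtain j where j: "j < length a" "\<forall>t<j. b!t = a!t" "b!j < a!j" "length b = length a"
    using assms(2) by (auto simp: lex_less_iff)
  show ?thesis unfolding lex_less_iff
  proof (intro conjI exI[of _ "min i j"])
    show "length c = length a" using i j by simp
    show "min i j < length a" using i j by simp
    show "\<forall>t<min i j. c ! t = a ! t" using i j by simp
    show "c ! min i j < a ! min i j"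
      using i j by (cases i j rule: linorder_cases) auto
  qed
qed

lemma lex_total:
  assumes "length a = length b" "a \<noteq> b"
  shows "lex_less a b \<or> lex_less b a"
proof -
  have "\<exists>t. t < length a \<and> a!t \<noteq> b!t" using assms by (auto simp: list_eq_iff_nth_eq)
  then obtain t0 where t0: "t0 < length a \<and> a!t0 \<noteq> b!t0" by blast
  define i where "i = (LEAST t. t < length a \<and> a!t \<noteq> b!t)"
  have i: "i < length a" "a!i \<noteq> b!i"
    using LeastI[of "\<lambda>t. t < length a \<and> a!t \<noteq> b!t", OF t0] unfolding i_def by auto
  have mn: "\<And>t. t < length a \<and> a!t \<noteq> b!t \<Longrightarrow> i \<le> t"
    unfolding i_def by (rule Least_le)
  have pre: "\<forall>t<i. a!t = b!t"
  proof (intro allI impI)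
    fix t assume "t < i"
    then have "t < length a" "\<not> i \<le> t" using i(1) by auto
    then show "a!t = b!t" using mn[of t] by blast
  qed
  show ?thesis
  proof (cases "a!i < b!i")
    case True then show ?thesis using i pre assms unfolding lex_less_iff by auto
  next
    case False then have "b!i < a!i" using i by simp
    then show ?thesis using i pre assms unfolding lex_less_iff by (auto intro!: exI[of _ i])
  qed
qed

lemma finite_Hmon: "finite (Hmon l q)"
proof -
  have "Hmon l q \<subseteq> {xs. set xs \<subseteq> {..q-1} \<and> length xs = l}"
    by (auto simp: Hmon_def in_set_conv_nth)
  then show ?thesis using finite_lists_length_eq[of "{..q-1}" l] finite_subset by blast
qed

lemma mdeg_sum: "mdeg a = (\<Sum>t<length a. a!t)"
  unfolding mdeg_def by (simp add: sum_list_sum_nth atLeast0LessThan)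

lemma first_lex_up:
  assumes "finite S" "x \<in> first_lex S r" "y \<in> S" "lex_less x y"
  shows "y \<in> first_lex S r"
proof -
  have "{z \<in> S. lex_less y z} \<subseteq> {z \<in> S. lex_less x z}" using assms lex_trans by blast
  then have "card {z \<in> S. lex_less y z} \<le> card {z \<in> S. lex_less x z}"
    using assms(1) by (intro card_mono) auto
  then show ?thesis using assms unfolding first_lex_def by auto
qed

lemma initial_is_first_lex:
  assumes "finite H" "S \<subseteq> H" "\<And>a b. a \<in> H \<Longrightarrow> b \<in> H \<Longrightarrow> length a = length b"
    and up: "\<And>x y. x \<in> S \<Longrightarrow> y \<in> H \<Longrightarrow> lex_less x y \<Longrightarrow> y \<in> S"
  shows "S = first_lex H (card S)"
proof
  have fS: "finite S" using assms finite_subset by blast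
  show "S \<subseteq> first_lex H (card S)"
  proof
    fix x assume x: "x \<in> S"
    have "{z \<in> H. lex_less x z} \<subseteq> S - {x}" using up x lex_irrefl by blast
    then have "card {z \<in> H. lex_less x z} \<le> card (S - {x})" using fS by (intro card_mono) auto
    also have "\<dots> < card S" using fS x by (rule card_Diff1_less)
    finally show "x \<in> first_lex H (card S)" using x assms(2) unfolding first_lex_def by auto
  qed
  show "first_lex H (card S) \<subseteq> S"
  proof
    fix x assume x: "x \<in> first_lex H (card S)"
    show "x \<in> S"
    proof (rule ccontr)
      assume nx: "x \<notin> S"
      have xH: "x \<in> H" using x unfolding first_lex_def by auto
      have "S \<subseteq> {z \<in> H. lex_less x z}"
      proof
        fix s assume s: "s \<in> S"
        then have "s \<noteq> x" using nx by auto
        moreover have "length s = length x" using s xH assms(2,3) by blast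
        ultimately have "lex_less x s \<or> lex_less s x" using lex_total by blast
        then show "s \<in> {z \<in> H. lex_less x z}" using up s xH nx assms(2) by blast
      qed
      then have "card S \<le> card {z \<in> H. lex_less x z}" using assms(1) by (intro card_mono) auto
      then show False using x unfolding first_lex_def by auto
    qed
  qed
qed


lemma exists_small:
  assumes "a \<in> Hmon l q" "mdeg a < l * (q - 1)"
  shows "\<exists>j<l. a!j < q - 1"
proof (rule ccontr)
  assume "\<not> (\<exists>j<l. a!j < q - 1)"
  then have all: "\<forall>j<l. a!j = q - 1" using assms(1) unfolding Hmon_def by (metis (mono_tags, lifting) le_antisym mem_Collect_eq not_less)
  have len: "length a = l" using assms(1) by (simp add: Hmon_def)
  have "mdeg a = (\<Sum>t<l. a!t)" using len by (simp add: mdeg_sum)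
  also have "\<dots> = (\<Sum>t<l. q - 1)" using all by (intro sum.cong) auto
  also have "\<dots> = l * (q - 1)" by simp
  finally show False using assms(2) by simp
qed

lemma incr:
  assumes "a \<in> Hmon l q" "j < l" "a!j < q - 1"
  shows "a[j := a!j + 1] \<in> Hmon l q" "mdeg (a[j := a!j + 1]) = mdeg a + 1"
    "lex_less a (a[j := a!j + 1])" "mdvd a (a[j := a!j + 1])"
proof -
  have len: "length a = l" using assms(1) by (simp add: Hmon_def)
  show "a[j := a!j + 1] \<in> Hmon l q" using assms len by (auto simp: Hmon_def nth_list_update)
  show "mdeg (a[j := a!j + 1]) = mdeg a + 1" unfolding mdeg_def using assms len
    by (simp add: sum_list_update)
  show "lex_less a (a[j := a!j + 1])" unfolding lex_less_iff using assms len
    by (auto intro!: exI[of _ j])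
  show "mdvd a (a[j := a!j + 1])" unfolding mdvd_def using assms len
    by (auto simp: nth_list_update)
qed

lemma key:
  assumes nu: "nu \<in> Hle l q (d-1)" and mu: "mu \<in> Hdeg l q d" and mu': "mu' \<in> Hdeg l q d"
    and dv: "mdvd nu mu" and lt: "lex_less mu mu'" and d: "1 \<le> d"
  obtains nu' where "nu' \<in> Hle l q (d-1)" "mdvd nu' mu'" "nu' = nu \<or> lex_less nu nu'"
proof -
  have len: "length nu = l" "length mu = l" "length mu' = l"
    using assms by (auto simp: Hle_def Hdeg_def Hmon_def)
  have bnd: "\<forall>t<l. mu'!t \<le> q-1" using mu' by (auto simp: Hdeg_def Hmon_def)
  have degmu': "mdeg mu' = d" using mu' by (auto simp: Hdeg_def)
  have degnu: "(\<Sum>t<l. nu!t) \<le> d-1" using nu len by (auto simp: Hle_def mdeg_sum)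
  have nm: "\<forall>t<l. nu!t \<le> mu!t" using dv len by (auto simp: mdvd_def)
  obtain i where i: "i<l" "\<forall>t<i. mu!t = mu'!t" "mu!i < mu'!i"
    using lt len by (auto simp: lex_less_iff)
  define K where "K = {t. t<l \<and> 0 < mu'!t}"
  have fK: "finite K" unfolding K_def by auto
  have iK: "i \<in> K" using i unfolding K_def by auto
  define k where "k = Max K"
  have kK: "k \<in> K" unfolding k_def using fK iK Max_in by blast
  have ik: "i \<le> k" unfolding k_def using fK iK by simp
  have kl: "k < l" "0 < mu'!k" using kK K_def by auto
  have zero: "\<And>t. k < t \<Longrightarrow> t < l \<Longrightarrow> mu'!t = 0"
  proof (rule ccontr)
    fix t assume "k < t" "t < l" "mu'!t \<noteq> 0"
    then have "t \<in> K" unfolding K_def by auto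
    then have "t \<le> k" unfolding k_def using fK by simp
    then show False using \<open>k < t\<close> by simp
  qed
  define nu' where "nu' = mu'[k := mu'!k - 1]"
  have lennu': "length nu' = l" using len by (simp add: nu'_def)
  have nu'_nth: "\<And>t. t < l \<Longrightarrow> nu'!t = (if t = k then mu'!k - 1 else mu'!t)"
    using kl len by (auto simp: nu'_def nth_list_update)
  have deg': "mdeg nu' = d - 1" unfolding nu'_def mdeg_def using degmu' kl len
    by (simp add: sum_list_update mdeg_def)
  have nu'H: "nu' \<in> Hle l q (d-1)"
    using lennu' deg' bnd nu'_nth by (auto simp: Hle_def Hmon_def)
  have dv': "mdvd nu' mu'" using lennu' len nu'_nth by (auto simp: mdvd_def)
  have "\<not> lex_less nu' nu"
  proof
    assume "lex_less nu' nu"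
    then obtain j where j: "j<l" "\<forall>t<j. nu'!t = nu!t" "nu'!j < nu!j"
      using len lennu' by (auto simp: lex_less_iff)
    consider "j<i" | "j = i" | "i<j" by linarith
    then show False
    proof cases
      case 1
      then have "nu!j \<le> mu'!j" using nm i j by (metis less_trans)
      then have "j = k" using nu'_nth[of j] j by (auto split: if_splits)
      then show False using 1 ik by simp
    next
      case 2
      then have "nu!j \<le> mu!j" using nm j by auto
      then have "j = k" using nu'_nth[of j] j i 2 by (auto split: if_splits)
      then show False using nu'_nth[of j] j i 2 \<open>nu!j \<le> mu!j\<close> by auto
    next
      case 3
      have "nu'!i = nu!i" using j 3 by auto
      moreover have "nu!i \<le> mu!i" using nm i by auto
      ultimately have ik2: "i = k" using nu'_nth[of i] i by (auto split: if_splits)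
      have kj: "k < j" using 3 ik2 by simp
      have "nu'!j = 0" using nu'_nth[of j] zero[of j] kj j by auto
      then have pos: "0 < nu!j" using j by simp
      have s1: "(\<Sum>t<l. nu'!t) = (\<Sum>t\<in>{..k}. nu'!t)"
        using kl nu'_nth zero by (intro sum.mono_neutral_right) auto
      have s2: "(\<Sum>t\<in>{..k}. nu'!t) = (\<Sum>t\<in>{..k}. nu!t)"
        using j kj by (intro sum.cong) auto
      have "(\<Sum>t\<in>insert j {..k}. nu!t) \<le> (\<Sum>t<l. nu!t)"
        using kl j by (intro sum_mono2) auto
      moreover have "(\<Sum>t\<in>insert j {..k}. nu!t) = nu!j + (\<Sum>t\<in>{..k}. nu!t)"
        using kj by simp
      moreover have "(\<Sum>t<l. nu'!t) = d - 1" using deg' lennu' by (simp add: mdeg_sum)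
      ultimately show False using degnu pos s1 s2 by linarith
    qed
  qed
  then have "nu' = nu \<or> lex_less nu nu'" using lex_total[of nu' nu] len lennu' by auto
  then show ?thesis using that nu'H dv' by blast
qed


theorem corollary3p3:
  fixes q m l d rho :: nat
  assumes "prime_power q" and "m \<ge> 1"
    and "1 \<le> l" and "l \<le> m"
    and "1 \<le> d" and "d \<le> l * (q - 1)"
    and "rho \<le> card (Hle l q (d - 1))"
  shows "\<exists>rho' :: nat. SH l q (Mset l q (d - 1) rho) \<inter> Hdeg l q d = Lset l q d rho'
           \<and> (rho > 0 \<longrightarrow> rho' > 0)"
proof -
  define A where "A = Hle l q (d-1)"
  define M where "M = Mset l q (d-1) rho"
  define H where "H = Hdeg l q d"
  define S where "S = SH l q M \<inter> H"
  have finH: "finite H" unfolding H_def Hdeg_def using finite_Hmon by auto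
  have finA: "finite A" unfolding A_def Hle_def using finite_Hmon by auto
  have MA: "M \<subseteq> A" by (auto simp: M_def A_def Mset_def first_lex_def)
  have up: "y \<in> S" if x: "x \<in> S" and y: "y \<in> H" and xy: "lex_less x y" for x y
  proof -
    from x obtain nu where nu: "nu \<in> M" "mdvd nu x" and xH: "x \<in> H"
      by (auto simp: S_def SH_def)
    obtain nu' where nu': "nu' \<in> A" "mdvd nu' y" "nu' = nu \<or> lex_less nu nu'"
      using key[where nu=nu and mu=x and mu'=y and l=l and q=q and d=d] nu MA xH y xy assms(5)
      unfolding H_def A_def by blast
    have "nu' \<in> M"
      using nu'(3)
    proof
      assume "lex_less nu nu'"
      then show "nu' \<in> M" using first_lex_up[OF finA, of nu rho nu'] nu nu'
        unfolding M_def Mset_def A_def by blast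
    qed (use nu in simp)
    then show "y \<in> S" using y nu' by (auto simp: S_def SH_def H_def Hdeg_def)
  qed
  have eq: "S = first_lex H (card S)"
  proof (rule initial_is_first_lex[OF finH])
    show "S \<subseteq> H" by (auto simp: S_def)
    show "\<And>a b. a \<in> H \<Longrightarrow> b \<in> H \<Longrightarrow> length a = length b" by (auto simp: H_def Hdeg_def Hmon_def)
    show "\<And>x y. x \<in> S \<Longrightarrow> y \<in> H \<Longrightarrow> lex_less x y \<Longrightarrow> y \<in> S" by (rule up)
  qed
  have pos: "S \<noteq> {}" if rho: "rho > 0"
  proof -
    have "replicate l 0 \<in> A" by (auto simp: A_def Hle_def Hmon_def mdeg_def sum_list_replicate)
    then obtain x where x: "x \<in> A"
      and xmin: "\<And>y. y \<in> A \<Longrightarrow> card {z\<in>A. lex_less x z} \<le> card {z\<in>A. lex_less y z}"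
      using ex_has_least_nat[of "\<lambda>y. y \<in> A" "replicate l 0" "\<lambda>y. card {z\<in>A. lex_less y z}"]
      by blast
    have top: "\<not> lex_less x y" if y: "y \<in> A" for y
    proof
      assume xy: "lex_less x y"
      have "{z\<in>A. lex_less y z} \<subset> {z\<in>A. lex_less x z}"
        using xy y lex_trans lex_irrefl by blast
      then have "card {z\<in>A. lex_less y z} < card {z\<in>A. lex_less x z}"
        using finA by (intro psubset_card_mono) auto
      then show False using xmin[OF y] by simp
    qed
    have e: "{z\<in>A. lex_less x z} = {}" using top by auto
    have c0: "card {z\<in>A. lex_less x z} < rho" using rho by (simp only: e card.empty)
    have xM: "x \<in> M" unfolding M_def Mset_def A_def[symmetric] first_lex_def using x c0 by blast
    have xH: "x \<in> Hmon l q" "mdeg x \<le> d - 1" using x by (auto simp: A_def Hle_def)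
    have xdeg: "mdeg x = d - 1"
    proof (rule ccontr)
      assume "mdeg x \<noteq> d - 1"
      then have "mdeg x < l * (q - 1)" using xH assms(6) by linarith
      then obtain j where j: "j < l" "x!j < q - 1" using exists_small xH by blast
      have "x[j := x!j+1] \<in> A" using incr[OF xH(1) j] xH \<open>mdeg x \<noteq> d - 1\<close>
        by (auto simp: A_def Hle_def)
      then show False using top incr(3)[OF xH(1) j] by blast
    qed
    then have "mdeg x < l * (q - 1)" using assms(5,6) by linarith
    then obtain j where j: "j < l" "x!j < q - 1" using exists_small xH by blast
    have "x[j := x!j+1] \<in> S"
      using incr[OF xH(1) j] xdeg xM assms(5) by (auto simp: S_def SH_def H_def Hdeg_def)
    then show ?thesis by blast
  qed
  show ?thesis
  proof (intro exI conjI impI)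
    show "SH l q (Mset l q (d - 1) rho) \<inter> Hdeg l q d = Lset l q d (card S)"
      using eq by (simp add: S_def M_def H_def Lset_def)
    assume "rho > 0"
    then show "card S > 0" using pos finH by (simp add: S_def card_gt_0_iff)
  qed
qed

end
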